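(* Consider the Markov process described in the context with $K=1$, satisfying Assumption (A) and the ergodicity condition (E). For each $x\in\{-1,1\}^c$ let $\beta_{0,x}$ denote the unique root in $(0,1)$ of equation $(\mathrm E_x)$. Then the largest of the $2^c$ roots $\beta_{0,x}$ is attained at $x=(1,1,\dots,1)$, i.e. $\beta_{0,x}\le\beta_{0,(1,\dots,1)}$ for all $x\in\{-1,1\}^c$.
   Context: Fix integers $c\ge 1$ and $K\ge1$ (in the claim $K=1$). Consider an irreducible continuous-time Markov process on $V\cup W$, where $V$ is finite and $W=\{\mathbf n=(n_0,\dots,n_c): n_0\in\{0,1,\dots\},\ n_i\in\{0,1\}\}$. For each $i\in\{1,\dots,c\}$ and integer $k\le K$ there are nonnegative rates $a_{k,i},b_{k,i},c_{k,i},d_{k,i}$. From $\mathbf n\in W$, for each $i$ and $k\in\{-n_0,\dots,K\}$, the process jumps (changing only coordinates $0$ and $i$) from $(n_0,n_i)=(n_0,0)$ to $(n_0+k,1)$ at rate $a_{k,i}$ and to $(n_0+k,0)$ at rate $b_{k,i}$, and from $(n_0,1)$ to $(n_0+k,1)$ at rate $c_{k,i}$ and to $(n_0+k,0)$ at rate $d_{k,i}$; from $\mathbf n$ it jumps into $V$ with total rate $\sum_i\sum_{k\le -n_0-1}((1-n_i)(a_{k,i}+b_{k,i})+n_i(c_{k,i}+d_{k,i}))$; no other transitions leave $W$, and from $V$ no transitions go to states with $n_0\ge K$. Let $A_i(z)=\sum_{k=-\infty}^K a_{k,i}z^{K-k}$ and similarly $B_i,C_i,D_i$ with $b,c,d$.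 Assumption (A): for each $i$: (i) $A_i(1),B_i(1),C_i(1),D_i(1)<\infty$; (ii) $A_i(1),D_i(1)>0$; (iii) $A_i'(1),B_i'(1),C_i'(1),D_i'(1)<\infty$; (iv) $a_{K,i}=0$ or $d_{K,i}=0$; (v) $b_{K,i}=c_{K,i}\ne0$. Ergodicity condition (E): $0<\sum_{i=1}^c\frac{1}{A_i(1)+D_i(1)}\bigl(D_i(1)(A_i'(1)-KA_i(1)+B_i'(1)-KB_i(1))+A_i(1)(C_i'(1)-KC_i(1)+D_i'(1)-KD_i(1))\bigr)$. Let $F_i(z)=z^K(A_i(1)+B_i(1)-C_i(1)-D_i(1))-B_i(z)+C_i(z)$. For real $\beta_0\in[0,1]$ let $R_i(\beta_0)=\sqrt{F_i(\beta_0)^2+4A_i(\beta_0)D_i(\beta_0)}$ (nonnegative square root). For $x\in\{-1,1\}^c$, equation $(\mathrm E_x)$ in the unknown $\beta_0$ is \[0=\sum_{i=1}^c\Bigl(x_iR_i(\beta_0)+B_i(\beta_0)+C_i(\beta_0)-\beta_0^K\bigl(A_i(1)+B_i(1)+C_i(1)+D_i(1)\bigr)\Bigr).\] *)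

theory Defs
  imports Complex_Main
begin

text \<open>K = 1. A rate family for a fixed i is a function r :: int \<Rightarrow> real,
  r k being the rate for jump size k (only k \<le> 1 matters).
  Generating function R(z) = sum over k \<le> 1 of r k z^(1-k) = sum_j r (1 - j) z^j.\<close>

definition gf :: "(int \<Rightarrow> real) \<Rightarrow> real \<Rightarrow> real" where
  "gf r z = (\<Sum>j. r (1 - int j) * z ^ j)"

definition gf_deriv1 :: "(int \<Rightarrow> real) \<Rightarrow> real" where
  "gf_deriv1 r = (\<Sum>j. real j * r (1 - int j))"

definition Fq :: "(int \<Rightarrow> real) \<Rightarrow> (int \<Rightarrow> real) \<Rightarrow> (int \<Rightarrow> real) \<Rightarrow> (int \<Rightarrow> real) \<Rightarrow> real \<Rightarrow> real" where
  "Fq a b c d z = z * (gf a 1 + gf b 1 - gf c 1 - gf d 1) - gf b z + gf c z"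

definition Rq :: "(int \<Rightarrow> real) \<Rightarrow> (int \<Rightarrow> real) \<Rightarrow> (int \<Rightarrow> real) \<Rightarrow> (int \<Rightarrow> real) \<Rightarrow> real \<Rightarrow> real" where
  "Rq a b c d z = sqrt ((Fq a b c d z)\<^sup>2 + 4 * gf a z * gf d z)"

text \<open>Right-hand side of equation (E_x), K = 1; rates indexed by i \<in> {1..n}.\<close>
definition Ex_fun :: "nat \<Rightarrow> (nat \<Rightarrow> int \<Rightarrow> real) \<Rightarrow> (nat \<Rightarrow> int \<Rightarrow> real) \<Rightarrow> (nat \<Rightarrow> int \<Rightarrow> real)
    \<Rightarrow> (nat \<Rightarrow> int \<Rightarrow> real) \<Rightarrow> (nat \<Rightarrow> real) \<Rightarrow> real \<Rightarrow> real" where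
  "Ex_fun n a b c d x z = (\<Sum>i=1..n. x i * Rq (a i) (b i) (c i) (d i) z + gf (b i) z + gf (c i) z
      - z * (gf (a i) 1 + gf (b i) 1 + gf (c i) 1 + gf (d i) 1))"

end

theory Submission imports Defs "HOL-Analysis.Analysis" begin


lemma gf_summable:
  fixes r :: "int \<Rightarrow> real" and z :: real
  assumes nn: "\<And>j. r (1 - int j) \<ge> 0" and sm: "summable (\<lambda>j. r (1 - int j))"
    and z: "0 \<le> z" "z \<le> 1"
  shows "summable (\<lambda>j. r (1 - int j) * z ^ j)"
proof (rule summable_comparison_test[OF _ sm])
  show "\<exists>N. \<forall>n\<ge>N. norm (r (1 - int n) * z ^ n) \<le> r (1 - int n)"
    using nn z by (auto intro!: exI[of _ 0] mult_left_le simp: abs_mult power_le_one)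
qed

lemma gf_pos:
  fixes r :: "int \<Rightarrow> real" and z :: real
  assumes nn: "\<And>j. r (1 - int j) \<ge> 0" and sm: "summable (\<lambda>j. r (1 - int j))"
    and pos: "gf r 1 > 0" and z: "0 < z" "z \<le> 1"
  shows "gf r z > 0"
proof (rule ccontr)
  assume "\<not> gf r z > 0"
  moreover have "gf r z \<ge> 0" unfolding gf_def using nn z
    by (intro suminf_nonneg gf_summable[OF nn sm]) auto
  ultimately have "gf r z = 0" by simp
  hence "\<forall>j. r (1 - int j) * z ^ j = 0" unfolding gf_def
    using suminf_eq_zero_iff[OF gf_summable[OF nn sm] ] nn z by auto
  hence "\<forall>j. r (1 - int j) = 0" using z by auto
  hence "gf r 1 = 0" unfolding gf_def by simp
  with pos show False by simp
qed

lemma gf_deriv: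
  fixes r :: "int \<Rightarrow> real"
  assumes nn: "\<And>j. r (1 - int j) \<ge> 0" and sm: "summable (\<lambda>j. r (1 - int j))"
    and sm2: "summable (\<lambda>j. real j * r (1 - int j))"
  shows "(gf r has_real_derivative gf_deriv1 r) (at 1 within {0..1})"
proof -
  define f' where "f' n x = r (1 - int n) * (real n * x ^ (n - 1))" for n and x :: real
  have d: "\<And>n x. x \<in> {0..1} \<Longrightarrow> ((\<lambda>x. r (1 - int n) * x ^ n) has_field_derivative f' n x) (at x within {0..1})"
    unfolding f'_def by (auto intro!: derivative_eq_intros)
  have u: "uniform_limit {0..1} (\<lambda>n x. \<Sum>i<n. f' i x) (\<lambda>x. \<Sum>i. f' i x) sequentially"
  proof (rule Weierstrass_m_test[OF _ sm2])
    fix n and x :: real assume x: "x \<in> {0..1}"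
    have "\<bar>x ^ (n - 1)\<bar> \<le> 1" using x by (auto simp: power_le_one)
    hence "\<bar>r (1 - int n)\<bar> * (real n * \<bar>x ^ (n - 1)\<bar>) \<le> \<bar>r (1 - int n)\<bar> * (real n * 1)"
      by (intro mult_left_mono) auto
    thus "norm (f' n x) \<le> real n * r (1 - int n)" using nn[of n]
      by (simp add: f'_def abs_mult mult.commute)
  qed
  obtain g where g: "\<forall>x\<in>{0..1}. (\<lambda>n. r (1 - int n) * x ^ n) sums g x \<and>
        (g has_field_derivative (\<Sum>i. f' i x)) (at x within {0..1})"
    using has_field_derivative_series[OF convex_real_interval(5) d u, of 0] by auto
  have eq: "\<And>x. x \<in> {0..1} \<Longrightarrow> g x = gf r x" using g unfolding gf_def
    by (metis sums_unique)
  have "(g has_field_derivative (\<Sum>i. f' i 1)) (at 1 within {0..1})" using g by auto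
  moreover have "(\<Sum>i. f' i 1) = gf_deriv1 r" unfolding f'_def gf_deriv1_def
    by (simp add: mult.commute)
  ultimately have "(g has_field_derivative gf_deriv1 r) (at 1 within {0..1})" by simp
  thus ?thesis
    by (rule has_field_derivative_transform_within[where d=1]) (auto simp: eq)
qed


lemma E_sums:
  fixes r :: "int \<Rightarrow> real"
  assumes nn: "\<And>j. r (1 - int j) \<ge> 0" and sm: "summable (\<lambda>j. r (1 - int j))" and s: "s \<le> 0"
  shows "(\<lambda>j. r (1 - int j) * exp (real j * s + (t - s))) sums (gf r (exp s) * exp (t - s))"
proof -
  have "summable (\<lambda>j. r (1 - int j) * exp s ^ j)"
    using s by (intro gf_summable[OF nn sm]) auto
  hence "(\<lambda>j. r (1 - int j) * exp s ^ j) sums gf r (exp s)" unfolding gf_def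
    using summable_sums by blast
  from sums_mult2[OF this, of "exp (t - s)"] show ?thesis
    by (simp add: exp_add exp_of_nat_mult mult.assoc)
qed

lemma E_conv:
  fixes r :: "int \<Rightarrow> real"
  assumes nn: "\<And>j. r (1 - int j) \<ge> 0" and sm: "summable (\<lambda>j. r (1 - int j))"
    and s: "s1 \<le> 0" "s2 \<le> 0" and th: "0 \<le> \<theta>" "\<theta> \<le> 1"
  shows "gf r (exp (\<theta>* s1+(1-\<theta>)* s2)) * exp ((\<theta>*t1+(1-\<theta>)*t2) - (\<theta>* s1+(1-\<theta>)* s2))
     \<le> \<theta> * (gf r (exp s1) * exp (t1 - s1)) + (1-\<theta>) * (gf r (exp s2) * exp (t2 - s2))"
proof -
  have sm0: "\<theta>* s1+(1-\<theta>)* s2 \<le> 0" using s th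
    by (metis add_nonpos_nonpos diff_ge_0_iff_ge mult_nonneg_nonpos)
  have 1: "(\<lambda>j. \<theta> * (r (1 - int j) * exp (real j * s1 + (t1 - s1))) + (1-\<theta>) * (r (1 - int j) * exp (real j * s2 + (t2 - s2))))
     sums (\<theta> * (gf r (exp s1) * exp (t1 - s1)) + (1-\<theta>) * (gf r (exp s2) * exp (t2 - s2)))"
    by (intro sums_add sums_mult E_sums[OF nn sm] s)
  show ?thesis
  proof (rule sums_le[OF _ E_sums[OF nn sm sm0] 1])
    fix j
    have "exp ((1 - \<theta>) *\<^sub>R (real j * s2 + (t2 - s2)) + \<theta> *\<^sub>R (real j * s1 + (t1 - s1)))
      \<le> (1 - \<theta>) * exp (real j * s2 + (t2 - s2)) + \<theta> * exp (real j * s1 + (t1 - s1))"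
      by (rule convex_onD[OF exp_convex]) (use th in auto)
    moreover have "(1 - \<theta>) *\<^sub>R (real j * s2 + (t2 - s2)) + \<theta> *\<^sub>R (real j * s1 + (t1 - s1))
        = real j * (\<theta>* s1+(1-\<theta>)* s2) + ((\<theta>*t1+(1-\<theta>)*t2) - (\<theta>* s1+(1-\<theta>)* s2))"
      by (simp add: algebra_simps)
    ultimately have "exp (real j * (\<theta>* s1+(1-\<theta>)* s2) + ((\<theta>*t1+(1-\<theta>)*t2) - (\<theta>* s1+(1-\<theta>)* s2)))
      \<le> \<theta> * exp (real j * s1 + (t1 - s1)) + (1 - \<theta>) * exp (real j * s2 + (t2 - s2))" by simp
    from mult_left_mono[OF this nn[of j]]
    show "r (1 - int j) * exp (real j * (\<theta>* s1+(1-\<theta>)* s2) + ((\<theta>*t1+(1-\<theta>)*t2) - (\<theta>* s1+(1-\<theta>)* s2)))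
       \<le> \<theta> * (r (1 - int j) * exp (real j * s1 + (t1 - s1))) + (1-\<theta>) * (r (1 - int j) * exp (real j * s2 + (t2 - s2)))"
      by (simp add: algebra_simps)
  qed
qed

lemma K_lemma:
  fixes P W Q R :: real
  assumes Q: "Q > 0" and R: "R > 0"
  shows "\<And>u. u > 0 \<Longrightarrow> P + W + sqrt ((P-W)^2 + 4*Q*R) \<le> 2 * max (P + Q*u) (W + R/u)"
    and "\<exists>u>0. P + W + sqrt ((P-W)^2 + 4*Q*R) = 2*(P + Q*u) \<and> P + W + sqrt ((P-W)^2 + 4*Q*R) = 2*(W + R/u)"
proof -
  define S where "S = sqrt ((P-W)^2 + 4*Q*R)"
  have nn0: "0 \<le> (P-W)^2 + 4*Q*R" using Q R
    by (intro add_nonneg_nonneg) (auto intro!: mult_nonneg_nonneg)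
  have S2: "S^2 = (P-W)^2 + 4*Q*R" unfolding S_def using real_sqrt_pow2[OF nn0] .
  have S0: "S \<ge> 0" unfolding S_def using nn0 by simp
  have "\<bar>P - W\<bar>^2 < S^2" using S2 Q R by simp
  hence Sgt: "\<bar>P - W\<bar> < S" using S0 by (metis abs_ge_zero power_less_imp_less_base)
  define a where "a = (W - P + S)/2"
  define b where "b = (P - W + S)/2"
  have a0: "a > 0" and b0: "b > 0" using Sgt unfolding a_def b_def by auto
  have ab: "a * b = Q * R" unfolding a_def b_def using S2
    by (simp add: power2_eq_square algebra_simps)
  {
    fix u :: real assume u: "u > 0"
    show "P + W + S \<le> 2 * max (P + Q*u) (W + R/u)"
    proof (rule ccontr)
      assume "\<not> ?thesis"
      hence nl: "P + W + S > 2 * max (P + Q*u) (W + R/u)" by simp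
      have h1: "P + W + S > 2*(P+Q*u)"
        using nl max.cobounded1[of "P+Q*u" "W+R/u"] by (smt (verit))
      have h2: "P+W+S > 2*(W + R/u)"
        using nl max.cobounded2[of "W+R/u" "P+Q*u"] by (smt (verit))
      note h = h1 h2
      have "Q*u < a" unfolding a_def using h(1) by simp
      moreover have "R/u < b"
      proof -
        define v where "v = R/u"
        have "P+W+S > 2*(W + v)" using h(2) v_def by simp
        hence "v < b" unfolding b_def by simp
        thus ?thesis using v_def by simp
      qed
      ultimately have "Q*u < a" "R/u < b" by auto
      hence "(Q*u)*(R/u) < a*b"
        using Q R u a0 by (intro mult_strict_mono) auto
      thus False using ab u by simp
    qed
  }
  show "\<exists>u>0. P + W + S = 2*(P + Q*u) \<and> P + W + S = 2*(W + R/u)"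
  proof (intro exI conjI)
    show "a/Q > 0" using a0 Q by simp
    show "P + W + S = 2*(P + Q*(a/Q))" using Q unfolding a_def by (simp add: field_simps)
    have "R/(a/Q) = b" using ab a0 Q by (simp add: field_simps)
    thus "P + W + S = 2*(W + R/(a/Q))" unfolding b_def by (simp add: field_simps)
  qed
qed


definition good :: "(int \<Rightarrow> real) \<Rightarrow> bool" where
  "good r \<longleftrightarrow> (\<forall>j. r (1 - int j) \<ge> 0) \<and> summable (\<lambda>j. r (1 - int j))"

definition QQ :: "(int \<Rightarrow> real) \<Rightarrow> real \<Rightarrow> real" where
  "QQ r s = gf r (exp s) * exp (- s)"

definition Hh :: "(int \<Rightarrow> real) \<Rightarrow> (int \<Rightarrow> real) \<Rightarrow> (int \<Rightarrow> real) \<Rightarrow> (int \<Rightarrow> real) \<Rightarrow> real \<Rightarrow> real" where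
  "Hh a b c d s = (let P = QQ b s - (gf a 1 + gf b 1); W = QQ c s - (gf c 1 + gf d 1) in
     P + W + sqrt ((P - W)^2 + 4 * QQ a s * QQ d s))"

lemma QQ_conv:
  assumes g: "good r" and s: "s1 \<le> 0" "s2 \<le> 0" and th: "0 \<le> \<theta>" "\<theta> \<le> 1"
  shows "QQ r (\<theta> * s1+(1-\<theta>) * s2) * exp (\<theta>*t1+(1-\<theta>)*t2)
     \<le> \<theta> * (QQ r s1 * exp t1) + (1-\<theta>) * (QQ r s2 * exp t2)"
proof -
  have eq: "gf r (exp s) * exp (t - s) = QQ r s * exp t" for s t
  proof -
    have "exp (t - s) = exp (- s) * exp t" by (simp add: exp_add[symmetric])
    thus ?thesis unfolding QQ_def by simp
  qed
  show ?thesis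
    using E_conv[of r s1 s2 \<theta> t1 t2] g s th unfolding good_def eq by simp
qed

lemma QQ_pos:
  assumes g: "good r" and p: "gf r 1 > 0" and s: "s \<le> 0"
  shows "QQ r s > 0"
proof -
  have "exp s \<le> 1" using s by simp
  hence "gf r (exp s) > 0" using gf_pos[of r "exp s"] g p unfolding good_def by simp
  thus ?thesis unfolding QQ_def by simp
qed

lemma Hh_conv:
  assumes ga: "good a" and gb: "good b" and gc: "good c" and gd: "good d"
    and pa: "gf a 1 > 0" and pd: "gf d 1 > 0"
    and s: "s1 \<le> 0" "s2 \<le> 0" and th: "0 \<le> \<theta>" "\<theta> \<le> 1"
  shows "Hh a b c d (\<theta> * s1+(1-\<theta>) * s2) \<le> \<theta> * Hh a b c d s1 + (1-\<theta>) * Hh a b c d s2"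
proof -
  define k1 where "k1 = gf a 1 + gf b 1"
  define k2 where "k2 = gf c 1 + gf d 1"
  define m where "m = \<theta> * s1+(1-\<theta>) * s2"
  have m0: "m \<le> 0" unfolding m_def using s th
    by (metis add_nonpos_nonpos diff_ge_0_iff_ge mult_nonneg_nonpos)
  have H: "Hh a b c d s = (QQ b s - k1) + (QQ c s - k2) + sqrt (((QQ b s - k1) - (QQ c s - k2))^2 + 4 * QQ a s * QQ d s)" for s
    unfolding Hh_def k1_def k2_def Let_def by simp
  obtain u1 where u1: "u1 > 0" "Hh a b c d s1 = 2*((QQ b s1 - k1) + QQ a s1 * u1)"
     "Hh a b c d s1 = 2*((QQ c s1 - k2) + QQ d s1 / u1)"
    using K_lemma(2)[OF QQ_pos[OF ga pa s(1)] QQ_pos[OF gd pd s(1)], of "QQ b s1 - k1" "QQ c s1 - k2"]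
    unfolding H by auto
  obtain u2 where u2: "u2 > 0" "Hh a b c d s2 = 2*((QQ b s2 - k1) + QQ a s2 * u2)"
     "Hh a b c d s2 = 2*((QQ c s2 - k2) + QQ d s2 / u2)"
    using K_lemma(2)[OF QQ_pos[OF ga pa s(2)] QQ_pos[OF gd pd s(2)], of "QQ b s2 - k1" "QQ c s2 - k2"]
    unfolding H by auto
  define t1 where "t1 = ln u1"
  define t2 where "t2 = ln u2"
  have e1: "u1 = exp t1" "1/u1 = exp (-t1)" using u1 unfolding t1_def by (auto simp: exp_minus inverse_eq_divide)
  have e2: "u2 = exp t2" "1/u2 = exp (-t2)" using u2 unfolding t2_def by (auto simp: exp_minus inverse_eq_divide)
  define tm where "tm = \<theta>*t1+(1-\<theta>)*t2"
  have "Hh a b c d m \<le> 2 * max ((QQ b m - k1) + QQ a m * exp tm) ((QQ c m - k2) + QQ d m / exp tm)"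
    unfolding H by (rule K_lemma(1)[OF QQ_pos[OF ga pa m0] QQ_pos[OF gd pd m0]]) simp
  also have "\<dots> \<le> 2 * (\<theta> * Hh a b c d s1 / 2 + (1-\<theta>) * Hh a b c d s2 / 2)"
  proof -
    have qb: "QQ b m \<le> \<theta> * QQ b s1 + (1-\<theta>) * QQ b s2"
      using QQ_conv[OF gb s th, of 0 0] unfolding m_def by simp
    have qc: "QQ c m \<le> \<theta> * QQ c s1 + (1-\<theta>) * QQ c s2"
      using QQ_conv[OF gc s th, of 0 0] unfolding m_def by simp
    have qa: "QQ a m * exp tm \<le> \<theta> * (QQ a s1 * u1) + (1-\<theta>) * (QQ a s2 * u2)"
      using QQ_conv[OF ga s th, of t1 t2] unfolding m_def tm_def e1 e2 by simp
    have qd: "QQ d m / exp tm \<le> \<theta> * (QQ d s1 / u1) + (1-\<theta>) * (QQ d s2 / u2)"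
    proof -
      have "QQ d m / exp tm = QQ d m * exp (\<theta>*(-t1)+(1-\<theta>)*(-t2))"
      proof -
        have "\<theta>*(-t1)+(1-\<theta>)*(-t2) = - tm" unfolding tm_def by (simp add: algebra_simps)
        thus ?thesis by (simp add: exp_minus divide_inverse)
      qed
      also have "\<dots> \<le> \<theta> * (QQ d s1 * exp (-t1)) + (1-\<theta>) * (QQ d s2 * exp (-t2))"
        using QQ_conv[OF gd s th, of "-t1" "-t2"] unfolding m_def by simp
      also have "\<dots> = \<theta> * (QQ d s1 / u1) + (1-\<theta>) * (QQ d s2 / u2)"
        using e1(2) e2(2) by (metis times_divide_eq_right mult_1_right)
      finally show ?thesis .
    qed
    have A: "(QQ b m - k1) + QQ a m * exp tm \<le> \<theta> * Hh a b c d s1 / 2 + (1-\<theta>) * Hh a b c d s2 / 2"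
    proof -
      have "\<theta> * Hh a b c d s1 / 2 + (1-\<theta>) * Hh a b c d s2 / 2
         = (\<theta> * QQ b s1 + (1-\<theta>) * QQ b s2) + (\<theta> * (QQ a s1 * u1) + (1-\<theta>) * (QQ a s2 * u2)) - k1"
        unfolding u1(2) u2(2) by (simp add: field_simps)
      thus ?thesis using qa qb by linarith
    qed
    have B: "(QQ c m - k2) + QQ d m / exp tm \<le> \<theta> * Hh a b c d s1 / 2 + (1-\<theta>) * Hh a b c d s2 / 2"
    proof -
      have "\<theta> * Hh a b c d s1 / 2 + (1-\<theta>) * Hh a b c d s2 / 2
         = (\<theta> * QQ c s1 + (1-\<theta>) * QQ c s2) + (\<theta> * (QQ d s1 / u1) + (1-\<theta>) * (QQ d s2 / u2)) - k2"
        unfolding u1(3) u2(3) by (simp add: field_simps)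
      thus ?thesis using qc qd by linarith
    qed
    have "max ((QQ b m - k1) + QQ a m * exp tm) ((QQ c m - k2) + QQ d m / exp tm)
       \<le> \<theta> * Hh a b c d s1 / 2 + (1-\<theta>) * Hh a b c d s2 / 2" by (rule max.boundedI[OF A B])
    thus ?thesis by (rule mult_left_mono) simp
  qed
  finally show ?thesis unfolding m_def by simp
qed


lemma term_deriv:
  assumes ga: "good a" and gb: "good b" and gc: "good c" and gd: "good d"
    and sa: "summable (\<lambda>j. real j * a (1 - int j))" and sb: "summable (\<lambda>j. real j * b (1 - int j))"
    and sc: "summable (\<lambda>j. real j * c (1 - int j))" and sd: "summable (\<lambda>j. real j * d (1 - int j))"
    and pa: "gf a 1 > 0" and pd: "gf d 1 > 0"
  shows "((\<lambda>z. Rq a b c d z + gf b z + gf c z - z * (gf a 1 + gf b 1 + gf c 1 + gf d 1))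
     has_real_derivative (2 / (gf a 1 + gf d 1)) *
       (gf d 1 * (gf_deriv1 a - gf a 1 + gf_deriv1 b - gf b 1)
        + gf a 1 * (gf_deriv1 c - gf c 1 + gf_deriv1 d - gf d 1))) (at 1 within {0..1})"
proof -
  define \<alpha> where "\<alpha> = gf a 1"
  define \<beta> where "\<beta> = gf b 1"
  define \<gamma> where "\<gamma> = gf c 1"
  define \<delta> where "\<delta> = gf d 1"
  define \<alpha>' where "\<alpha>' = gf_deriv1 a"
  define \<beta>' where "\<beta>' = gf_deriv1 b"
  define \<gamma>' where "\<gamma>' = gf_deriv1 c"
  define \<delta>' where "\<delta>' = gf_deriv1 d"
  have dA: "(gf a has_real_derivative \<alpha>') (at 1 within {0..1})"
    using gf_deriv[of a] ga sa unfolding good_def \<alpha>'_def by simp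
  have dB: "(gf b has_real_derivative \<beta>') (at 1 within {0..1})"
    using gf_deriv[of b] gb sb unfolding good_def \<beta>'_def by simp
  have dC: "(gf c has_real_derivative \<gamma>') (at 1 within {0..1})"
    using gf_deriv[of c] gc sc unfolding good_def \<gamma>'_def by simp
  have dD: "(gf d has_real_derivative \<delta>') (at 1 within {0..1})"
    using gf_deriv[of d] gd sd unfolding good_def \<delta>'_def by simp
  define I where "I z = (Fq a b c d z)^2 + 4 * gf a z * gf d z" for z
  have F1: "Fq a b c d 1 = \<alpha> - \<delta>" unfolding Fq_def \<alpha>_def \<beta>_def \<gamma>_def \<delta>_def by simp
  have dF: "(Fq a b c d has_real_derivative ((\<alpha> + \<beta> - \<gamma> - \<delta>) - \<beta>' + \<gamma>')) (at 1 within {0..1})"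
  proof -
    have "((\<lambda>z. z * (\<alpha> + \<beta> - \<gamma> - \<delta>) - gf b z + gf c z) has_real_derivative
       (1 * (\<alpha> + \<beta> - \<gamma> - \<delta>) - \<beta>' + \<gamma>')) (at 1 within {0..1})"
      by (auto intro!: derivative_eq_intros dB dC)
    thus ?thesis unfolding Fq_def[abs_def] \<alpha>_def \<beta>_def \<gamma>_def \<delta>_def by simp
  qed
  have dI: "(I has_real_derivative (2 * (\<alpha> - \<delta>) * ((\<alpha> + \<beta> - \<gamma> - \<delta>) - \<beta>' + \<gamma>') + 4 * (\<alpha>' * \<delta> + \<alpha> * \<delta>')))
      (at 1 within {0..1})"
  proof -
    have "(I has_real_derivative (of_nat 2 * Fq a b c d 1 ^ (2 - 1) * ((\<alpha> + \<beta> - \<gamma> - \<delta>) - \<beta>' + \<gamma>')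
          + (4 * \<alpha>' * gf d 1 + 4 * gf a 1 * \<delta>'))) (at 1 within {0..1})"
      unfolding I_def[abs_def]
      by (auto intro!: derivative_eq_intros dF dA dD)
    thus ?thesis unfolding F1 \<alpha>_def \<delta>_def by (simp add: algebra_simps)
  qed
  have I1: "I 1 = (\<alpha> + \<delta>)^2" unfolding I_def F1 \<alpha>_def \<delta>_def by (simp add: power2_eq_square algebra_simps)
  have pos: "\<alpha> + \<delta> > 0" using pa pd unfolding \<alpha>_def \<delta>_def by simp
  have sq: "sqrt (I 1) = \<alpha> + \<delta>" using I1 pos by simp
  have dR: "((\<lambda>z. sqrt (I z)) has_real_derivative
       inverse (\<alpha> + \<delta>) / 2 * (2 * (\<alpha> - \<delta>) * ((\<alpha> + \<beta> - \<gamma> - \<delta>) - \<beta>' + \<gamma>') + 4 * (\<alpha>' * \<delta> + \<alpha> * \<delta>')))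
      (at 1 within {0..1})"
  proof -
    have "0 < I 1" using I1 pos by simp
    from DERIV_chain2[OF DERIV_real_sqrt[OF this] dI] show ?thesis unfolding sq by simp
  qed
  have Rq_eq: "Rq a b c d z = sqrt (I z)" for z unfolding Rq_def I_def ..
  have "((\<lambda>z. Rq a b c d z + gf b z + gf c z - z * (\<alpha> + \<beta> + \<gamma> + \<delta>)) has_real_derivative
      inverse (\<alpha> + \<delta>) / 2 * (2 * (\<alpha> - \<delta>) * ((\<alpha> + \<beta> - \<gamma> - \<delta>) - \<beta>' + \<gamma>') + 4 * (\<alpha>' * \<delta> + \<alpha> * \<delta>'))
      + \<beta>' + \<gamma>' - 1 * (\<alpha> + \<beta> + \<gamma> + \<delta>)) (at 1 within {0..1})"
  proof -
    have dL: "((\<lambda>z. z * (\<alpha> + \<beta> + \<gamma> + \<delta>)) has_real_derivative 1 * (\<alpha> + \<beta> + \<gamma> + \<delta>)) (at 1 within {0..1})"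
      by (auto intro!: derivative_eq_intros)
    show ?thesis unfolding Rq_eq by (intro DERIV_diff DERIV_add dR dB dC dL)
  qed
  moreover have "inverse (\<alpha> + \<delta>) / 2 * (2 * (\<alpha> - \<delta>) * ((\<alpha> + \<beta> - \<gamma> - \<delta>) - \<beta>' + \<gamma>') + 4 * (\<alpha>' * \<delta> + \<alpha> * \<delta>'))
      + \<beta>' + \<gamma>' - 1 * (\<alpha> + \<beta> + \<gamma> + \<delta>)
     = (2 / (\<alpha> + \<delta>)) * (\<delta> * (\<alpha>' - \<alpha> + \<beta>' - \<beta>) + \<alpha> * (\<gamma>' - \<gamma> + \<delta>' - \<delta>))"
    using pos by (simp add: field_simps)
  ultimately show ?thesis unfolding \<alpha>_def \<beta>_def \<gamma>_def \<delta>_def \<alpha>'_def \<beta>'_def \<gamma>'_def \<delta>'_def by simp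
qed


lemma term_Hh:
  assumes z: "z > 0"
  shows "Rq a b c d z + gf b z + gf c z - z * (gf a 1 + gf b 1 + gf c 1 + gf d 1) = z * Hh a b c d (ln z)"
proof -
  have Q: "QQ r (ln z) = gf r z / z" for r unfolding QQ_def using z by (simp add: exp_minus divide_inverse)
  define P where "P = gf b z / z - (gf a 1 + gf b 1)"
  define W where "W = gf c z / z - (gf c 1 + gf d 1)"
  have PW: "P - W = - Fq a b c d z / z" unfolding P_def W_def Fq_def using z by (simp add: field_simps)
  have inner: "(P - W)^2 + 4 * (gf a z / z) * (gf d z / z) = ((Fq a b c d z)^2 + 4 * gf a z * gf d z) / z^2"
    unfolding PW using z by (simp add: field_simps power2_eq_square)
  have sq: "sqrt ((P - W)^2 + 4 * (gf a z / z) * (gf d z / z)) = Rq a b c d z / z"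
    unfolding inner Rq_def real_sqrt_divide using z by simp
  have "Hh a b c d (ln z) = P + W + Rq a b c d z / z"
    unfolding Hh_def Let_def Q P_def[symmetric] W_def[symmetric] sq ..
  hence "z * Hh a b c d (ln z) = z * P + z * W + Rq a b c d z" using z by (simp add: distrib_left)
  moreover have "z * P = gf b z - z * (gf a 1 + gf b 1)" unfolding P_def using z by (simp add: right_diff_distrib)
  moreover have "z * W = gf c z - z * (gf c 1 + gf d 1)" unfolding W_def using z by (simp add: right_diff_distrib)
  ultimately show ?thesis by (simp add: algebra_simps)
qed

lemma term_one:
  assumes "gf a 1 > 0" "gf d 1 > 0"
  shows "Rq a b c d 1 + gf b 1 + gf c 1 - 1 * (gf a 1 + gf b 1 + gf c 1 + gf d 1) = 0"
proof -
  have "(Fq a b c d 1)^2 + 4 * gf a 1 * gf d 1 = (gf a 1 + gf d 1)^2"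
    unfolding Fq_def by (simp add: power2_eq_square algebra_simps)
  hence "Rq a b c d 1 = gf a 1 + gf d 1" unfolding Rq_def using assms by simp
  thus ?thesis by simp
qed

lemma Rq_nonneg:
  assumes "good a" "good d" "0 \<le> z" "z \<le> 1"
  shows "Rq a b c d z \<ge> 0"
proof -
  have "gf a z \<ge> 0" "gf d z \<ge> 0" using assms unfolding good_def gf_def
    by (auto intro!: suminf_nonneg gf_summable)
  hence "0 \<le> (Fq a b c d z)^2 + 4 * gf a z * gf d z" by simp
  thus ?thesis unfolding Rq_def by simp
qed

theorem corollary3:
  fixes n :: nat and a b c d :: "nat \<Rightarrow> int \<Rightarrow> real"
  assumes n_pos: "n \<ge> 1"
    and nonneg: "\<And>i k. i \<in> {1..n} \<Longrightarrow> k \<le> 1 \<Longrightarrow>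
                  a i k \<ge> 0 \<and> b i k \<ge> 0 \<and> c i k \<ge> 0 \<and> d i k \<ge> 0"
    and A_i: "\<And>i. i \<in> {1..n} \<Longrightarrow> summable (\<lambda>j. a i (1 - int j)) \<and> summable (\<lambda>j. b i (1 - int j))
                  \<and> summable (\<lambda>j. c i (1 - int j)) \<and> summable (\<lambda>j. d i (1 - int j))"
    and A_ii: "\<And>i. i \<in> {1..n} \<Longrightarrow> gf (a i) 1 > 0 \<and> gf (d i) 1 > 0"
    and A_iii: "\<And>i. i \<in> {1..n} \<Longrightarrow> summable (\<lambda>j. real j * a i (1 - int j))
                  \<and> summable (\<lambda>j. real j * b i (1 - int j))
                  \<and> summable (\<lambda>j. real j * c i (1 - int j))
                  \<and> summable (\<lambda>j. real j * d i (1 - int j))"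
    and A_iv: "\<And>i. i \<in> {1..n} \<Longrightarrow> a i 1 = 0 \<or> d i 1 = 0"
    and A_v: "\<And>i. i \<in> {1..n} \<Longrightarrow> b i 1 = c i 1 \<and> b i 1 \<noteq> 0"
    and E: "0 < (\<Sum>i=1..n. (1 / (gf (a i) 1 + gf (d i) 1)) *
              (gf (d i) 1 * (gf_deriv1 (a i) - gf (a i) 1 + gf_deriv1 (b i) - gf (b i) 1)
               + gf (a i) 1 * (gf_deriv1 (c i) - gf (c i) 1 + gf_deriv1 (d i) - gf (d i) 1)))"
  shows "\<forall>x :: nat \<Rightarrow> real. (\<forall>i\<in>{1..n}. x i = -1 \<or> x i = 1) \<longrightarrow>
           (\<forall>\<beta> \<beta>'. \<beta> \<in> {0<..<1} \<and> Ex_fun n a b c d x \<beta> = 0 \<and>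
                   \<beta>' \<in> {0<..<1} \<and> Ex_fun n a b c d (\<lambda>_. 1) \<beta>' = 0 \<longrightarrow> \<beta> \<le> \<beta>')"
proof (intro allI impI)
  fix x :: "nat \<Rightarrow> real" and \<beta> \<beta>' :: real
  assume xs: "\<forall>i\<in>{1..n}. x i = -1 \<or> x i = 1"
  assume H: "\<beta> \<in> {0<..<1} \<and> Ex_fun n a b c d x \<beta> = 0 \<and> \<beta>' \<in> {0<..<1} \<and> Ex_fun n a b c d (\<lambda>_. 1) \<beta>' = 0"
  have gd: "good (a i) \<and> good (b i) \<and> good (c i) \<and> good (d i)" if "i \<in> {1..n}" for i
    using nonneg[OF that] A_i[OF that] unfolding good_def by auto
  define T where "T z = Ex_fun n a b c d (\<lambda>_. 1) z" for z
  define g where "g s = (\<Sum>i=1..n. Hh (a i) (b i) (c i) (d i) s)" for s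
  have Tg: "T z = z * g (ln z)" if z: "z > 0" for z
    unfolding T_def Ex_fun_def g_def sum_distrib_left
    by (rule sum.cong) (use term_Hh[OF z] in simp_all)
  have gconv: "g (\<theta> * s1 + (1-\<theta>) * s2) \<le> \<theta> * g s1 + (1-\<theta>) * g s2"
    if s: "s1 \<le> 0" "s2 \<le> 0" and th: "0 \<le> \<theta>" "\<theta> \<le> 1" for s1 s2 \<theta>
  proof -
    have "g (\<theta> * s1 + (1-\<theta>) * s2) \<le> (\<Sum>i=1..n. \<theta> * Hh (a i) (b i) (c i) (d i) s1 + (1-\<theta>) * Hh (a i) (b i) (c i) (d i) s2)"
      unfolding g_def
      by (rule sum_mono, rule Hh_conv) (use gd A_ii s th in auto)
    thus ?thesis unfolding g_def by (simp add: sum.distrib sum_distrib_left)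
  qed
  have T1: "T 1 = 0" unfolding T_def Ex_fun_def
    by (rule sum.neutral) (use term_one A_ii in simp)
  define L where "L = (\<Sum>i=1..n. (2 / (gf (a i) 1 + gf (d i) 1)) *
       (gf (d i) 1 * (gf_deriv1 (a i) - gf (a i) 1 + gf_deriv1 (b i) - gf (b i) 1)
        + gf (a i) 1 * (gf_deriv1 (c i) - gf (c i) 1 + gf_deriv1 (d i) - gf (d i) 1)))"
  have dT: "(T has_real_derivative L) (at 1 within {0..1})"
  proof -
    have "((\<lambda>z. \<Sum>i=1..n. Rq (a i) (b i) (c i) (d i) z + gf (b i) z + gf (c i) z
        - z * (gf (a i) 1 + gf (b i) 1 + gf (c i) 1 + gf (d i) 1)) has_real_derivative L) (at 1 within {0..1})"
      unfolding L_def
      by (rule DERIV_sum, rule term_deriv) (use gd A_iii A_ii in auto)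
    thus ?thesis unfolding T_def Ex_fun_def by simp
  qed
  have Lpos: "L > 0"
  proof -
    have "L = 2 * (\<Sum>i=1..n. (1 / (gf (a i) 1 + gf (d i) 1)) *
              (gf (d i) 1 * (gf_deriv1 (a i) - gf (a i) 1 + gf_deriv1 (b i) - gf (b i) 1)
               + gf (a i) 1 * (gf_deriv1 (c i) - gf (c i) 1 + gf_deriv1 (d i) - gf (d i) 1)))"
      unfolding L_def sum_distrib_left by (rule sum.cong) auto
    thus ?thesis using E by simp
  qed
  obtain dd where dd: "dd > 0" "\<And>h. h > 0 \<Longrightarrow> 1 - h \<in> {0..1} \<Longrightarrow> h < dd \<Longrightarrow> T (1 - h) < T 1"
    using has_real_derivative_pos_inc_left[OF dT Lpos] by blast
  define h where "h = min (dd/2) ((1-\<beta>)/2)"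
  have h1: "h \<le> dd/2" "h \<le> (1-\<beta>)/2" unfolding h_def by (rule min.cobounded1, rule min.cobounded2)
  have h0: "h > 0" using dd H unfolding h_def by auto
  have b1: "\<beta> < 1" using H by auto
  have "(1-\<beta>)/2 < 1 - \<beta>" "dd/2 < dd" using b1 dd by simp_all
  hence hb: "h > 0" "h < dd" "h < 1 - \<beta>" using h1 h0 by linarith+
  define z where "z = 1 - h"
  have z: "\<beta> < z" "z < 1" "T z < 0" using hb H dd(2)[of h] T1 unfolding z_def by auto
  have Tb: "T \<beta> \<ge> 0"
  proof -
    have "Ex_fun n a b c d x \<beta> \<le> T \<beta>" unfolding T_def Ex_fun_def
    proof (rule sum_mono)
      fix i assume i: "i \<in> {1..n}"
      have "Rq (a i) (b i) (c i) (d i) \<beta> \<ge> 0" using gd[OF i] H by (intro Rq_nonneg) auto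
      hence "x i * Rq (a i) (b i) (c i) (d i) \<beta> \<le> 1 * Rq (a i) (b i) (c i) (d i) \<beta>"
      proof -
        have "x i = -1 \<or> x i = 1" using xs i by blast
        thus ?thesis using \<open>Rq (a i) (b i) (c i) (d i) \<beta> \<ge> 0\<close> by auto
      qed
      thus "x i * Rq (a i) (b i) (c i) (d i) \<beta> + gf (b i) \<beta> + gf (c i) \<beta> - \<beta> * (gf (a i) 1 + gf (b i) 1 + gf (c i) 1 + gf (d i) 1)
         \<le> 1 * Rq (a i) (b i) (c i) (d i) \<beta> + gf (b i) \<beta> + gf (c i) \<beta> - \<beta> * (gf (a i) 1 + gf (b i) 1 + gf (c i) 1 + gf (d i) 1)"
        by simp
    qed
    thus ?thesis using H by simp
  qed
  show "\<beta> \<le> \<beta>'"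
  proof (rule ccontr)
    assume "\<not> \<beta> \<le> \<beta>'"
    hence lt: "\<beta>' < \<beta>" by simp
    define s0 where "s0 = ln \<beta>'"
    define t where "t = ln \<beta>"
    define s where "s = ln z"
    have ord: "s0 < t" "t < s" "s < 0" using lt z H unfolding s0_def t_def s_def by auto
    have gs0: "g s0 = 0" using Tg[of \<beta>'] H unfolding T_def s0_def by auto
    have gt: "g t \<ge> 0" using Tg[of \<beta>] H Tb unfolding t_def by (auto simp: zero_le_mult_iff)
    have gs: "g s < 0" using Tg[of z] H z unfolding s_def by (auto simp: mult_less_0_iff)
    define \<theta> where "\<theta> = (s - t) / (s - s0)"
    have th: "0 \<le> \<theta>" "\<theta> \<le> 1" "\<theta> < 1" using ord unfolding \<theta>_def by (auto simp: field_simps)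
    have ne: "s - s0 \<noteq> 0" using ord by simp
    have m: "\<theta> * (s - s0) = s - t" unfolding \<theta>_def using ne by simp
    have "\<theta> * s0 + (1 - \<theta>) * s = s - \<theta> * (s - s0)" by (simp add: algebra_simps)
    hence tt: "t = \<theta> * s0 + (1 - \<theta>) * s" unfolding m by simp
    have "g t \<le> \<theta> * g s0 + (1 - \<theta>) * g s"
      unfolding tt by (rule gconv) (use ord th in auto)
    also have "\<dots> < 0" using gs0 gs th by (simp add: mult_pos_neg)
    finally show False using gt by simp
  qed
qed


end
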